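(* Let $k\ge 1$ and let $G$ be a graph with minimum degree at least $k$ and maximum degree $\Delta(G)$. Let $\Omega$ be a total $k$-coalition partition of $G$ of maximum cardinality $\mathrm{TC}_k(G)$. Then every $A\in\Omega$ forms a total $k$-coalition with at most $\Delta(G)-k+1$ sets in $\Omega$.
   Context: All graphs are finite, simple and connected. $N(v)$ denotes the open neighborhood of $v$. For a graph $G$ with $\delta(G)\ge k$, a set $S\subseteq V(G)$ is a total $k$-dominating set if $|N(v)\cap S|\ge k$ for every $v\in V(G)$. Two disjoint sets $U,W\subseteq V(G)$ form a total $k$-coalition if neither is a total $k$-dominating set but $U\cup W$ is. A total $k$-coalition partition of $G$ is a partition $\Omega$ of $V(G)$ in which every set forms a total $k$-coalition with some other set of $\Omega$; $\mathrm{TC}_k(G)$ is the maximum cardinality of such a partition. *)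

theory Defs
  imports Main "HOL-Library.Disjoint_Sets"
begin

definition graph :: "'a set \<Rightarrow> ('a \<Rightarrow> 'a \<Rightarrow> bool) \<Rightarrow> bool" where
  "graph V E \<longleftrightarrow> finite V \<and> V \<noteq> {} \<and>
     (\<forall>x y. E x y \<longrightarrow> x \<in> V \<and> y \<in> V) \<and>
     (\<forall>x y. E x y \<longrightarrow> E y x) \<and> (\<forall>x. \<not> E x x) \<and>
     (\<forall>u\<in>V. \<forall>v\<in>V. E\<^sup>*\<^sup>* u v)"

definition nbhd :: "'a set \<Rightarrow> ('a \<Rightarrow> 'a \<Rightarrow> bool) \<Rightarrow> 'a \<Rightarrow> 'a set" where
  "nbhd V E v = {u \<in> V. E v u}"

definition degree :: "'a set \<Rightarrow> ('a \<Rightarrow> 'a \<Rightarrow> bool) \<Rightarrow> 'a \<Rightarrow> nat" where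
  "degree V E v = card (nbhd V E v)"

definition min_degree :: "'a set \<Rightarrow> ('a \<Rightarrow> 'a \<Rightarrow> bool) \<Rightarrow> nat" where
  "min_degree V E = Min (degree V E ` V)"

definition max_degree :: "'a set \<Rightarrow> ('a \<Rightarrow> 'a \<Rightarrow> bool) \<Rightarrow> nat" where
  "max_degree V E = Max (degree V E ` V)"

definition total_k_dominating :: "'a set \<Rightarrow> ('a \<Rightarrow> 'a \<Rightarrow> bool) \<Rightarrow> nat \<Rightarrow> 'a set \<Rightarrow> bool" where
  "total_k_dominating V E k S \<longleftrightarrow> S \<subseteq> V \<and> (\<forall>v\<in>V. card (nbhd V E v \<inter> S) \<ge> k)"

definition total_k_coalition :: "'a set \<Rightarrow> ('a \<Rightarrow> 'a \<Rightarrow> bool) \<Rightarrow> nat \<Rightarrow> 'a set \<Rightarrow> 'a set \<Rightarrow> bool" where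
  "total_k_coalition V E k U W \<longleftrightarrow> U \<subseteq> V \<and> W \<subseteq> V \<and> U \<inter> W = {} \<and>
     \<not> total_k_dominating V E k U \<and> \<not> total_k_dominating V E k W \<and>
     total_k_dominating V E k (U \<union> W)"

definition total_k_coalition_partition :: "'a set \<Rightarrow> ('a \<Rightarrow> 'a \<Rightarrow> bool) \<Rightarrow> nat \<Rightarrow> 'a set set \<Rightarrow> bool" where
  "total_k_coalition_partition V E k P \<longleftrightarrow> partition_on V P \<and>
     (\<forall>A\<in>P. \<exists>B\<in>P. B \<noteq> A \<and> total_k_coalition V E k A B)"

definition TC :: "'a set \<Rightarrow> ('a \<Rightarrow> 'a \<Rightarrow> bool) \<Rightarrow> nat \<Rightarrow> nat" where
  "TC V E k = Max {card P | P. total_k_coalition_partition V E k P}"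

end

theory Submission
  imports Defs
begin

lemma arith_aux:
  fixes c t a D k :: nat
  assumes "c * t + a \<le> D" "a + t = k" "t \<ge> 1" "c \<ge> 1"
  shows "c \<le> D - k + 1"
proof -
  obtain c' where c': "c = Suc c'" using assms(4) by (cases c) auto
  obtain t' where t': "t = Suc t'" using assms(3) by (cases t) auto
  have "c * t = c' * t' + c' + t' + 1" using c' t' by (simp add: algebra_simps)
  then show ?thesis using assms c' t' by linarith
qed

theorem lemma3p3:
  fixes V :: "'a set" and E :: "'a \<Rightarrow> 'a \<Rightarrow> bool" and k :: nat and P :: "'a set set"
  assumes "graph V E"
    and "k \<ge> 1"
    and "min_degree V E \<ge> k"
    and "total_k_coalition_partition V E k P"
    and "card P = TC V E k"
  shows "\<forall>A\<in>P. card {B \<in> P. total_k_coalition V E k A B} \<le> max_degree V E - k + 1"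
proof
  fix A assume AP: "A \<in> P"
  define C where "C = {B \<in> P. total_k_coalition V E k A B}"
  have finV: "finite V" using assms(1) unfolding graph_def by auto
  have part: "partition_on V P" using assms(4) unfolding total_k_coalition_partition_def by auto
  have finP: "finite P" using part finV unfolding partition_on_def by (metis finite_UnionD)
  have finC: "finite C" unfolding C_def using finP by auto
  show "card C \<le> max_degree V E - k + 1"
  proof (cases "C = {}")
    case True then show ?thesis by simp
  next
    case False
    then obtain B0 where B0: "B0 \<in> C" by auto
    have "\<not> total_k_dominating V E k A" "A \<subseteq> V"
      using B0 unfolding C_def total_k_coalition_def by auto
    then obtain v where vV: "v \<in> V" and lt: "card (nbhd V E v \<inter> A) < k"
      unfolding total_k_dominating_def by auto
    define N where "N = nbhd V E v"
    have finN: "finite N" unfolding N_def nbhd_def using finV by auto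
    define a where "a = card (N \<inter> A)"
    define t where "t = k - a"
    have t1: "t \<ge> 1" and at: "a + t = k" using lt unfolding t_def a_def N_def by auto
    have Ane: "A \<noteq> {}" using part AP partition_onD3 by blast
    have ge: "card (N \<inter> B) \<ge> t" if "B \<in> C" for B
    proof -
      have co: "total_k_coalition V E k A B" using that unfolding C_def by auto
      then have dis: "A \<inter> B = {}" and dom: "total_k_dominating V E k (A \<union> B)"
        unfolding total_k_coalition_def by auto
      have "card (N \<inter> (A \<union> B)) \<ge> k" using dom vV unfolding total_k_dominating_def N_def by auto
      moreover have "N \<inter> (A \<union> B) = (N \<inter> A) \<union> (N \<inter> B)" by auto
      moreover have "card ((N \<inter> A) \<union> (N \<inter> B)) = card (N \<inter> A) + card (N \<inter> B)"
        using dis finN by (intro card_Un_disjoint) auto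
      ultimately show ?thesis unfolding t_def a_def by simp
    qed
    have AnC: "A \<notin> C"
    proof
      assume "A \<in> C"
      then have "A \<inter> A = {}" unfolding C_def total_k_coalition_def by auto
      with Ane show False by auto
    qed
    have CP: "C \<subseteq> P" unfolding C_def by auto
    have disj: "\<forall>i\<in>C. \<forall>j\<in>C. i \<noteq> j \<longrightarrow> (N \<inter> i) \<inter> (N \<inter> j) = {}"
      using part CP unfolding partition_on_def disjoint_def by blast
    have cardU: "card (\<Union>B\<in>C. N \<inter> B) = (\<Sum>B\<in>C. card (N \<inter> B))"
      using finC finN disj by (intro card_UN_disjoint) auto
    have sumge: "(\<Sum>B\<in>C. card (N \<inter> B)) \<ge> card C * t"
      using sum_mono[of C "\<lambda>_. t" "\<lambda>B. card (N \<inter> B)"] ge by auto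
    have disA: "(N \<inter> A) \<inter> (\<Union>B\<in>C. N \<inter> B) = {}"
    proof -
      have "A \<inter> B = {}" if "B \<in> C" for B
        using that unfolding C_def total_k_coalition_def by auto
      then show ?thesis by auto
    qed
    have "card ((N \<inter> A) \<union> (\<Union>B\<in>C. N \<inter> B)) = a + card (\<Union>B\<in>C. N \<inter> B)"
      unfolding a_def using finN disA by (intro card_Un_disjoint) auto
    moreover have "card ((N \<inter> A) \<union> (\<Union>B\<in>C. N \<inter> B)) \<le> card N"
      using finN by (intro card_mono) auto
    moreover have "card N \<le> max_degree V E"
      unfolding N_def max_degree_def degree_def[symmetric] using finV vV by auto
    ultimately have "card C * t + a \<le> max_degree V E" using cardU sumge by linarith
    moreover have "card C \<ge> 1" using False finC by (simp add: Suc_le_eq card_gt_0_iff)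
    ultimately show ?thesis using arith_aux at t1 by blast
  qed
qed

end
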